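(* Let $\mathcal M=(G,In,Out,Leak)$ be a linear compartmental model with compartmental matrix $A$, and let $i,j$ be distinct compartments with $i\ne1$ and $j\ne1$. Then $$\det\big((\lambda I-A)^{\{1,i\},\{1,j\}}\big)=\lambda^{-1}\det\big((\lambda I-A^*_1)^{i,j}\big).$$
   Context: A linear compartmental model $\mathcal M=(G,In,Out,Leak)$ consists of a finite directed graph $G=(V_G,E_G)$ without multi-edges, compartments $V_G=\{1,\dots,n\}$, and subsets $In,Out,Leak\subseteq V_G$; edge $q\to p$ carries parameter $a_{pq}$ and each $p\in Leak$ carries $a_{0p}$. The compartmental matrix $A$ has $A_{pp}=-\sum_{k:\,p\to k\in E_G}a_{kp}$ (minus $a_{0p}$ if $p\in Leak$), $A_{pq}=a_{pq}$ if $q\to p\in E_G$, $0$ otherwise. $A^*_1$ is the matrix obtained from $A$ by replacing its first column by zeros. For a matrix $B$, $B^{i,j}$ removes row $i$ and column $j$, and $B^{\{1,i\},\{1,j\}}$ removes rows $1,i$ and columns $1,j$. $\lambda$ is an indeterminate. *)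

theory Defs
  imports "Jordan_Normal_Form.Determinant" "HOL-Computational_Algebra.Polynomial"
begin

text \<open>An edge q -> p is the pair (q,p) in E.
  The parameter a_pq is a p q, the leak parameter a_0p is a 0 p.
  Parameters live in an arbitrary commutative ring (e.g. a polynomial ring
  of indeterminates).  Compartment p corresponds to matrix row/column p-1.\<close>

definition lin_comp_model ::
  "nat \<Rightarrow> (nat \<times> nat) set \<Rightarrow> nat set \<Rightarrow> nat set \<Rightarrow> nat set \<Rightarrow> bool" where
  "lin_comp_model n E In Out Leak \<longleftrightarrow>
     E \<subseteq> {1..n} \<times> {1..n} \<and> In \<subseteq> {1..n} \<and> Out \<subseteq> {1..n} \<and> Leak \<subseteq> {1..n}"

definition comp_matrix ::
  "nat \<Rightarrow> (nat \<times> nat) set \<Rightarrow> nat set \<Rightarrow> (nat \<Rightarrow> nat \<Rightarrow> 'a::comm_ring_1) \<Rightarrow> 'a mat" where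
  "comp_matrix n E Leak a = mat n n (\<lambda>(r, c).
     (let p = Suc r; q = Suc c in
      if p = q then
        - (\<Sum>k\<in>{k. (p, k) \<in> E}. a k p) - (if p \<in> Leak then a 0 p else 0)
      else if (q, p) \<in> E then a p q else 0))"

definition zero_first_col :: "'a::zero mat \<Rightarrow> 'a mat" where
  "zero_first_col A = mat (dim_row A) (dim_col A) (\<lambda>(r, c). if c = 0 then 0 else A $$ (r, c))"

definition lamI_minus :: "'a::comm_ring_1 mat \<Rightarrow> 'a poly mat" where
  "lamI_minus A = [:0, 1:] \<cdot>\<^sub>m 1\<^sub>m (dim_row A) - map_mat (\<lambda>x. [:x:]) A"

definition del_rc :: "'a mat \<Rightarrow> nat \<Rightarrow> nat \<Rightarrow> 'a mat" where
  "del_rc B i j = mat_delete B (i - 1) (j - 1)"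

definition del_rc2 :: "'a mat \<Rightarrow> nat \<Rightarrow> nat \<Rightarrow> 'a mat" where
  "del_rc2 B i j = mat_delete (mat_delete B (i - 1) (j - 1)) 0 0"

end

theory Submission
  imports Defs
begin

theorem lemma3p10:
  fixes n :: nat and E :: "(nat \<times> nat) set" and In Out Leak :: "nat set"
    and a :: "nat \<Rightarrow> nat \<Rightarrow> 'a::comm_ring_1" and i j :: nat
  assumes "lin_comp_model n E In Out Leak"
    and "i \<in> {1..n}" and "j \<in> {1..n}" and "i \<noteq> j" and "i \<noteq> 1" and "j \<noteq> 1"
  shows "det (del_rc (lamI_minus (zero_first_col (comp_matrix n E Leak a))) i j)
       = [:0, 1:] * det (del_rc2 (lamI_minus (comp_matrix n E Leak a)) i j)"
proof -
  define A where "A = comp_matrix n E Leak a"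
  define M where "M = lamI_minus (zero_first_col A)"
  define N where "N = lamI_minus A"
  define D where "D = mat_delete M (i-1) (j-1)"
  have i: "1 < i" "i \<le> n" and j: "1 < j" "j \<le> n" using assms by auto
  have dA: "dim_row A = n" "dim_col A = n" by (auto simp: A_def comp_matrix_def)
  have dM: "dim_row M = n" "dim_col M = n"
    by (auto simp: M_def lamI_minus_def zero_first_col_def dA)
  have dN: "dim_row N = n" "dim_col N = n"
    by (auto simp: N_def lamI_minus_def dA)
  have Mentry: "M $$ (r, c) = (if c = 0 then (if r = 0 then [:0,1:] else 0) else N $$ (r, c))"
    if "r < n" "c < n" for r c
    using that by (auto simp: M_def N_def lamI_minus_def zero_first_col_def dA)
  have Dc: "D \<in> carrier_mat (n-1) (n-1)" by (auto simp: D_def dM)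
  have n1: "0 < n - 1" using i j assms by auto
  have Dentry: "D $$ (r, 0) = (if r = 0 then [:0,1:] else 0)" if "r < n - 1" for r
    using that i j unfolding D_def mat_delete_def
    by (auto simp: dM Mentry)
  have "det D = (\<Sum>r<n-1. D $$ (r,0) * cofactor D r 0)"
    by (rule laplace_expansion_column[OF Dc n1])
  also have "\<dots> = D $$ (0,0) * cofactor D 0 0"
  proof -
    have "(\<Sum>r<n-1. D $$ (r,0) * cofactor D r 0) = D $$ (0,0) * cofactor D 0 0
        + (\<Sum>r\<in>{..<n-1} - {0}. D $$ (r,0) * cofactor D r 0)"
      using n1 by (subst sum.remove[of _ 0]) auto
    also have "(\<Sum>r\<in>{..<n-1} - {0}. D $$ (r,0) * cofactor D r 0) = 0"
      by (rule sum.neutral) (auto simp: Dentry)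
    finally show ?thesis by simp
  qed
  also have "\<dots> = [:0,1:] * det (mat_delete D 0 0)"
    using n1 Dentry by (simp add: cofactor_def)
  also have "mat_delete D 0 0 = mat_delete (mat_delete N (i-1) (j-1)) 0 0"
    using i j by (intro eq_matI) (auto simp: D_def mat_delete_def dM dN Mentry)
  finally show ?thesis
    by (simp add: D_def M_def N_def A_def del_rc_def del_rc2_def)
qed

end
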